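(* Let $e_1<e_2<e_3<e_4$ be distinct reals, $h>0$, and consider on $M_h$ the functions $\eta_1=\sum_{i<j}\ell_{ij}^2\sum_{k\ne i,j}e_k$ and $\eta_2=\sum_{i<j}\ell_{ij}^2\prod_{k\ne i,j}e_k$. For $\alpha\neq0$ and $\beta\in\mathbb R$, let $(\eta_1',\eta_2')$ be the functions obtained from the same formulas with each $e_i$ replaced by $\alpha e_i+\beta$. Then the integrable system $(\eta_1',\eta_2')$ on $M_h$ is topologically equivalent to $(\eta_1,\eta_2)$.
   Context: $\mathbf L=(\ell_{12},\ell_{13},\ell_{14},\ell_{23},\ell_{24},\ell_{34})\in\mathbb R^6\cong\mathfrak{so}(4)^*$ with the Lie–Poisson bracket of $\mathfrak{so}(4)$ (extending $\ell_{ji}=-\ell_{ij}$: $\{\ell_{ij},\ell_{jk}\}=-\ell_{ik}$ for distinct $i,j,k$, and $\{\ell_{ij},\ell_{kl}\}=0$ when $\{i,j\}\cap\{k,l\}=\emptyset$). $M_h=\{\mathbf L:\sum_{i<j}\ell_{ij}^2=2h,\ \ell_{12}\ell_{34}-\ell_{13}\ell_{24}+\ell_{14}\ell_{23}=0\}\cong S^2\times S^2$ is a symplectic leaf. Topological equivalence of integrable systems means there is a homeomorphism of the phase space mapping the Liouville foliation (connected components of fibres of the momentum map) of one system onto that of the other. *)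

theory Defs
  imports "HOL-Analysis.Analysis"
begin

text \<open>Coordinates: a point L of so(4)* = R^6 is a vector in real^6 with
  L$1 = l12, L$2 = l13, L$3 = l14, L$4 = l23, L$5 = l24, L$6 = l34.
  ell L i j gives l_ij for 1 <= i < j <= 4.\<close>

definition ell :: "real^6 \<Rightarrow> nat \<Rightarrow> nat \<Rightarrow> real" where
  "ell L i j =
     (if (i,j) = (1,2) then L$1
      else if (i,j) = (1,3) then L$2
      else if (i,j) = (1,4) then L$3
      else if (i,j) = (2,3) then L$4
      else if (i,j) = (2,4) then L$5
      else if (i,j) = (3,4) then L$6
      else 0)"

definition pairs4 :: "(nat \<times> nat) set" where
  "pairs4 = {(i,j). 1 \<le> i \<and> i < j \<and> j \<le> 4}"

definition Mh :: "real \<Rightarrow> (real^6) set" where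
  "Mh h = {L. (\<Sum>(i,j)\<in>pairs4. (ell L i j)^2) = 2*h \<and>
              ell L 1 2 * ell L 3 4 - ell L 1 3 * ell L 2 4 + ell L 1 4 * ell L 2 3 = 0}"

definition eta1 :: "(nat \<Rightarrow> real) \<Rightarrow> real^6 \<Rightarrow> real" where
  "eta1 e L = (\<Sum>(i,j)\<in>pairs4. (ell L i j)^2 * (\<Sum>k\<in>{1..4} - {i,j}. e k))"

definition eta2 :: "(nat \<Rightarrow> real) \<Rightarrow> real^6 \<Rightarrow> real" where
  "eta2 e L = (\<Sum>(i,j)\<in>pairs4. (ell L i j)^2 * (\<Prod>k\<in>{1..4} - {i,j}. e k))"

definition liouville_leaves :: "'a::topological_space set \<Rightarrow> ('a \<Rightarrow> 'b) \<Rightarrow> 'a set set" where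
  "liouville_leaves S F = {connected_component_set {y \<in> S. F y = F x} x | x. x \<in> S}"

definition top_equivalent :: "'a::topological_space set \<Rightarrow> ('a \<Rightarrow> 'b) \<Rightarrow> ('a \<Rightarrow> 'c) \<Rightarrow> bool" where
  "top_equivalent S F G \<longleftrightarrow>
     (\<exists>\<phi> \<psi>. homeomorphism S S \<phi> \<psi> \<and> (image \<phi>) ` liouville_leaves S F = liouville_leaves S G)"

end

theory Submission
  imports Defs
begin

lemma pairs4_eq: "pairs4 = {(1,2),(1,3),(1,4),(2,3),(2,4),(3,4)}"
  unfolding pairs4_def by auto

lemma four: "{1..4::nat} = {1,2,3,4}" by auto
lemma D: "{Suc 0..4::nat} - {Suc 0,2} = {3,4}" "{Suc 0..4::nat} - {Suc 0,3} = {2,4}"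
  "{Suc 0..4::nat} - {Suc 0,4} = {2,3}" "{Suc 0..4::nat} - {2,3} = {Suc 0,4}"
  "{Suc 0..4::nat} - {2,4} = {Suc 0,3}" "{Suc 0..4::nat} - {3,4} = {Suc 0,2}"
  by auto

lemma ell_simps: "ell L 1 2 = L$1" "ell L 1 3 = L$2" "ell L 1 4 = L$3"
  "ell L 2 3 = L$4" "ell L 2 4 = L$5" "ell L 3 4 = L$6"
  by (simp_all add: ell_def)

lemma sumsq: "(\<Sum>(i,j)\<in>pairs4. (ell L i j)^2) =
  (L$1)^2 + (L$2)^2 + (L$3)^2 + (L$4)^2 + (L$5)^2 + (L$6)^2"
  by (simp add: pairs4_eq ell_def)

lemma eta1_eq: "eta1 e L = (L$1)^2*(e 3 + e 4) + (L$2)^2*(e 2 + e 4) + (L$3)^2*(e 2 + e 3)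
  + (L$4)^2*(e 1 + e 4) + (L$5)^2*(e 1 + e 3) + (L$6)^2*(e 1 + e 2)"
  by (simp add: eta1_def pairs4_eq ell_def D algebra_simps)

lemma eta2_eq: "eta2 e L = (L$1)^2*(e 3 * e 4) + (L$2)^2*(e 2 * e 4) + (L$3)^2*(e 2 * e 3)
  + (L$4)^2*(e 1 * e 4) + (L$5)^2*(e 1 * e 3) + (L$6)^2*(e 1 * e 2)"
  by (simp add: eta2_def pairs4_eq ell_def D algebra_simps)

lemma eta1_aff: assumes "L \<in> Mh h"
  shows "eta1 (\<lambda>k. \<alpha> * e k + \<beta>) L = \<alpha> * eta1 e L + 4*\<beta>*h"
proof -
  have "(L$1)^2 + (L$2)^2 + (L$3)^2 + (L$4)^2 + (L$5)^2 + (L$6)^2 = 2*h"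
    using assms sumsq[of L] by (simp add: Mh_def)
  then show ?thesis unfolding eta1_eq by algebra
qed

lemma eta2_aff: assumes "L \<in> Mh h"
  shows "eta2 (\<lambda>k. \<alpha> * e k + \<beta>) L = \<alpha>^2 * eta2 e L + \<alpha>*\<beta>*eta1 e L + 2*\<beta>^2*h"
proof -
  have "(L$1)^2 + (L$2)^2 + (L$3)^2 + (L$4)^2 + (L$5)^2 + (L$6)^2 = 2*h"
    using assms sumsq[of L] by (simp add: Mh_def)
  then show ?thesis unfolding eta1_eq eta2_eq by algebra
qed

theorem lemma2:
  fixes e :: "nat \<Rightarrow> real" and h \<alpha> \<beta> :: real
  assumes "e 1 < e 2" "e 2 < e 3" "e 3 < e 4"
    and "h > 0" and "\<alpha> \<noteq> 0"
  shows "top_equivalent (Mh h)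
           (\<lambda>L. (eta1 (\<lambda>k. \<alpha> * e k + \<beta>) L, eta2 (\<lambda>k. \<alpha> * e k + \<beta>) L))
           (\<lambda>L. (eta1 e L, eta2 e L))"
proof -
  have key: "((eta1 (\<lambda>k. \<alpha> * e k + \<beta>) y, eta2 (\<lambda>k. \<alpha> * e k + \<beta>) y)
            = (eta1 (\<lambda>k. \<alpha> * e k + \<beta>) x, eta2 (\<lambda>k. \<alpha> * e k + \<beta>) x))
         \<longleftrightarrow> ((eta1 e y, eta2 e y) = (eta1 e x, eta2 e x))"
    if "x \<in> Mh h" "y \<in> Mh h" for x y
    using that assms(5) by (auto simp add: eta1_aff eta2_aff)
  have sets: "{y \<in> Mh h. (eta1 (\<lambda>k. \<alpha> * e k + \<beta>) y, eta2 (\<lambda>k. \<alpha> * e k + \<beta>) y)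
            = (eta1 (\<lambda>k. \<alpha> * e k + \<beta>) x, eta2 (\<lambda>k. \<alpha> * e k + \<beta>) x)}
        = {y \<in> Mh h. (eta1 e y, eta2 e y) = (eta1 e x, eta2 e x)}" if "x \<in> Mh h" for x
    using key[OF that] by blast
  have "liouville_leaves (Mh h)
           (\<lambda>L. (eta1 (\<lambda>k. \<alpha> * e k + \<beta>) L, eta2 (\<lambda>k. \<alpha> * e k + \<beta>) L))
        = liouville_leaves (Mh h) (\<lambda>L. (eta1 e L, eta2 e L))"
    unfolding liouville_leaves_def using sets by (metis (no_types, lifting))
  moreover have "homeomorphism (Mh h) (Mh h) (\<lambda>a. a) (\<lambda>a. a)" by (rule homeomorphism_ident)
  ultimately show ?thesis unfolding top_equivalent_def
    by (intro exI[of _ "\<lambda>a. a"]) (simp add: image_ident)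
qed

end
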